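(* Fix a day $d_i$ in a run of the online greedy algorithm on an instance of Model 1, and let $H_i$ be the weighted bipartite graph with category capacities $b'_{i,k}$ constructed on that day. Then any maximum-weight $b$-matching in $H_i$ among those of size at most $s_i$ is also a maximum-size $b$-matching in $H_i$ among those of size at most $s_i$.
   Context: Model 1: finite sets of agents $A$, categories $C$ and days $D=\{d_1,\dots,d_T\}$; each agent is eligible for a subset of categories; daily supply $s_i$ for day $d_i$; daily quota $q_{ik}$ for category $c_k$ on day $d_i$; each agent $a_j$ has a priority factor $\alpha_j>0$ and a set of available days; discount factor $\delta\in(0,1)$. In the online greedy algorithm, on day $d_i$ the set $A_i$ consists of the agents available on $d_i$ and not yet allocated on earlier days; $H_i$ is the bipartite graph with parts $A_i$ and $C$, with an edge $(a_j,c_k)$ whenever $a_j$ is eligible for $c_k$, of weight $w_i(a_j,c_k)=\alpha_j\delta^{i-1}$; each agent has capacity $1$ and category $c_k$ has capacity $b'_{i,k}=q_{ik}$. A $b$-matching is a set of edges in which each vertex is incident to at most its capacity many edges; its size is its number of edges and its weight is the sum of edge weights. *)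

theory Defs
  imports Complex_Main
begin

definition H_edges :: "'a set \<Rightarrow> 'c set \<Rightarrow> ('a \<Rightarrow> 'c \<Rightarrow> bool) \<Rightarrow> ('a \<times> 'c) set" where
  "H_edges Ai C elig = {(a, c). a \<in> Ai \<and> c \<in> C \<and> elig a c}"

definition H_weight :: "('a \<Rightarrow> real) \<Rightarrow> real \<Rightarrow> nat \<Rightarrow> 'a \<times> 'c \<Rightarrow> real" where
  "H_weight \<alpha> \<delta> i e = \<alpha> (fst e) * \<delta> ^ (i - 1)"

definition is_bmatching ::
  "('a \<times> 'c) set \<Rightarrow> ('a \<Rightarrow> nat) \<Rightarrow> ('c \<Rightarrow> nat) \<Rightarrow> ('a \<times> 'c) set \<Rightarrow> bool" where
  "is_bmatching E bA bC M \<longleftrightarrow>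
     M \<subseteq> E \<and>
     (\<forall>a. card {c. (a, c) \<in> M} \<le> bA a) \<and>
     (\<forall>c. card {a. (a, c) \<in> M} \<le> bC c)"

definition bm_weight :: "('a \<times> 'c \<Rightarrow> real) \<Rightarrow> ('a \<times> 'c) set \<Rightarrow> real" where
  "bm_weight w M = (\<Sum>e\<in>M. w e)"

end

theory Submission
  imports Defs
begin

lemma fin_sec1: "finite M \<Longrightarrow> finite {c. (a, c) \<in> M}"
  by (rule finite_subset[of _ "snd ` M"]) force+

lemma fin_sec2: "finite M \<Longrightarrow> finite {a. (a, c) \<in> M}"
  by (rule finite_subset[of _ "fst ` M"]) force+

lemma bm_inj:
  assumes "finite M" "is_bmatching E (\<lambda>_. 1) bC M"
  shows "inj_on fst M"
proof (rule inj_onI)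
  fix x y assume xy: "x \<in> M" "y \<in> M" "fst x = fst y"
  show "x = y"
  proof (rule ccontr)
    assume ne: "x \<noteq> y"
    have "{snd x, snd y} \<subseteq> {c. (fst x, c) \<in> M}" using xy by (metis (mono_tags, lifting) empty_subsetI insert_subsetI mem_Collect_eq prod.collapse)
    hence "card {snd x, snd y} \<le> card {c. (fst x, c) \<in> M}"
      using fin_sec1[OF assms(1)] by (rule card_mono[rotated])
    moreover have "snd x \<noteq> snd y" using ne xy(3) by (simp add: prod_eq_iff)
    moreover have "card {c. (fst x, c) \<in> M} \<le> 1" using assms(2) unfolding is_bmatching_def by blast
    ultimately show False by simp
  qed
qed

lemma aug:
  assumes finE: "finite E"
  shows "is_bmatching E (\<lambda>_. 1) bC M \<Longrightarrow> is_bmatching E (\<lambda>_. 1) bC M' \<Longrightarrow> card M < card M'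
    \<Longrightarrow> \<exists>N. is_bmatching E (\<lambda>_. 1) bC N \<and> card N = card M' \<and> fst ` M \<subseteq> fst ` N"
proof (induction "card (M - M')" arbitrary: M' rule: less_induct)
  case less
  have fM: "finite M" "finite M'" using less.prems finE unfolding is_bmatching_def
    by (auto intro: finite_subset)
  show ?case
  proof (cases "fst ` M \<subseteq> fst ` M'")
    case True thus ?thesis using less.prems by blast
  next
    case False
    then obtain b c where bc: "(b,c) \<in> M" "b \<notin> fst ` M'" by force
    hence bcM': "(b,c) \<notin> M'" by force
    obtain e where e: "e \<in> M'" "e \<notin> M" "card {x. (x,c) \<in> M'} < bC c \<or> e = (fst e, c)"
    proof (cases "card {x. (x,c) \<in> M'} < bC c")
      case True
      have "\<not> M' \<subseteq> M" using less.prems(3) card_mono[OF fM(1), of M'] by auto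
      then show ?thesis using that True by auto
    next
      case False
      hence ge: "bC c \<le> card {x. (x,c)\<in>M'}" by simp
      have le: "card {x. (x,c)\<in>M} \<le> bC c" using less.prems(1) unfolding is_bmatching_def by blast
      have "\<not> {x. (x,c)\<in>M'} \<subseteq> {x. (x,c)\<in>M}"
      proof
        assume sub: "{x. (x,c)\<in>M'} \<subseteq> {x. (x,c)\<in>M}"
        have "{x. (x,c)\<in>M'} \<subseteq> {x. (x,c)\<in>M} - {b}" using sub bcM' by auto
        hence "card {x. (x,c)\<in>M'} \<le> card ({x. (x,c)\<in>M} - {b})"
          by (rule card_mono[OF finite_Diff[OF fin_sec2[OF fM(1)]]])
        also have "\<dots> < card {x. (x,c)\<in>M}" using bc(1) fin_sec2[OF fM(1)]
          by (intro card_Diff1_less) auto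
        finally show False using ge le by linarith
      qed
      then obtain a where "(a,c)\<in>M'" "(a,c)\<notin>M" by auto
      then show ?thesis using that[of "(a,c)"] by auto
    qed
    define M'' where "M'' = insert (b,c) (M' - {e})"
    have bmM: "M \<subseteq> E" "\<forall>x. card {c. (x, c) \<in> M'} \<le> 1" "\<forall>y. card {x. (x, y) \<in> M'} \<le> bC y" "M' \<subseteq> E"
      using less.prems(1,2) unfolding is_bmatching_def by auto
    have bm: "is_bmatching E (\<lambda>_. 1) bC M''"
      unfolding is_bmatching_def
    proof (intro conjI allI)
      show "M'' \<subseteq> E" using bmM bc(1) unfolding M''_def by auto
    next
      fix x
      show "card {c. (x, c) \<in> M''} \<le> 1"
      proof (cases "x = b")
        case True
        hence "{c'. (x, c') \<in> M''} \<subseteq> {c}" using bc(2) unfolding M''_def by force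
        hence "card {c'. (x, c') \<in> M''} \<le> card {c}" by (rule card_mono[rotated]) simp
        thus ?thesis by simp
      next
        case False
        hence "{c'. (x, c') \<in> M''} \<subseteq> {c'. (x, c') \<in> M'}" unfolding M''_def by auto
        hence "card {c'. (x, c') \<in> M''} \<le> card {c'. (x, c') \<in> M'}"
          by (rule card_mono[OF fin_sec1[OF fM(2)]])
        thus ?thesis using bmM(2) by (meson order_trans)
      qed
    next
      fix y
      show "card {x. (x, y) \<in> M''} \<le> bC y"
      proof (cases "y = c")
        case False
        hence "{x. (x, y) \<in> M''} \<subseteq> {x. (x, y) \<in> M'}" unfolding M''_def by auto
        hence "card {x. (x, y) \<in> M''} \<le> card {x. (x, y) \<in> M'}"
          by (rule card_mono[OF fin_sec2[OF fM(2)]])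
        thus ?thesis using bmM(3) by (meson order_trans)
      next
        case yc: True
        let ?S = "{x. (x, c) \<in> M'}"
        have finS: "finite ?S" by (rule fin_sec2[OF fM(2)])
        show ?thesis
        proof (cases "card ?S < bC c")
          case True
          have "{x. (x, y) \<in> M''} \<subseteq> insert b ?S" unfolding M''_def yc by auto
          hence "card {x. (x, y) \<in> M''} \<le> card (insert b ?S)"
            by (rule card_mono[rotated]) (simp add: finS)
          also have "\<dots> \<le> Suc (card ?S)" by (simp add: card_insert_le_m1 finS card_insert_if)
          finally show ?thesis using True yc by simp
        next
          case False
          hence ee: "e = (fst e, c)" using e(3) by simp
          hence fS: "fst e \<in> ?S" using e(1) by (metis (mono_tags, lifting) mem_Collect_eq)
          have "{x. (x, y) \<in> M''} \<subseteq> insert b (?S - {fst e})" unfolding M''_def yc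
            using ee by (auto simp: prod_eq_iff)
          hence "card {x. (x, y) \<in> M''} \<le> card (insert b (?S - {fst e}))"
            by (rule card_mono[rotated]) (simp add: finS)
          also have "\<dots> \<le> Suc (card (?S - {fst e}))" by (simp add: finS card_insert_if)
          also have "\<dots> = card ?S" using fS finS
            by (metis card_Diff1_less card_Suc_Diff1)
          finally show ?thesis using bmM(3) yc by (meson order_trans)
        qed
      qed
    qed
    have cardeq: "card M'' = card M'" unfolding M''_def using fM e(1) bcM'
      by (simp add: card_Suc_Diff1 card_gt_0_iff Suc_pred, metis card_gt_0_iff empty_iff Suc_pred)
    have "M - M'' = (M - M') - {(b,c)}" unfolding M''_def using e(2) by auto
    hence less': "card (M - M'') < card (M - M')" using bc(1) bcM' fM
      by (metis DiffI card_Diff1_less finite_Diff)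
    from less.hyps[OF less' less.prems(1) bm] cardeq less.prems(3)
    show ?thesis by auto
  qed
qed

theorem lemma1:
  fixes A :: "'a set" and C :: "'c set"
    and elig :: "'a \<Rightarrow> 'c \<Rightarrow> bool"
    and T :: nat and s :: "nat \<Rightarrow> nat" and q :: "nat \<Rightarrow> 'c \<Rightarrow> nat"
    and \<alpha> :: "'a \<Rightarrow> real" and avail :: "'a \<Rightarrow> nat set" and \<delta> :: real
    and i :: nat and Ai :: "'a set" and M :: "('a \<times> 'c) set"
  assumes finA: "finite A" and finC: "finite C"
    and alpha_pos: "\<forall>a\<in>A. \<alpha> a > 0"
    and delta: "0 < \<delta>" "\<delta> < 1"
    and day: "1 \<le> i" "i \<le> T"
    and Ai: "Ai \<subseteq> {a \<in> A. i \<in> avail a}"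
    and M_bm: "is_bmatching (H_edges Ai C elig) (\<lambda>_. 1) (q i) M"
    and M_size: "card M \<le> s i"
    and M_maxw: "\<forall>M'. is_bmatching (H_edges Ai C elig) (\<lambda>_. 1) (q i) M' \<and> card M' \<le> s i
                    \<longrightarrow> bm_weight (H_weight \<alpha> \<delta> i) M' \<le> bm_weight (H_weight \<alpha> \<delta> i) M"
  shows "\<forall>M'. is_bmatching (H_edges Ai C elig) (\<lambda>_. 1) (q i) M' \<and> card M' \<le> s i
            \<longrightarrow> card M' \<le> card M"
proof (intro allI impI, elim conjE)
  fix M' assume M'bm: "is_bmatching (H_edges Ai C elig) (\<lambda>_. 1) (q i) M'" and M's: "card M' \<le> s i"
  let ?E = "H_edges Ai C elig"
  have EAC: "?E \<subseteq> A \<times> C" using Ai unfolding H_edges_def by auto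
  have finE: "finite ?E" using finite_subset[OF EAC] finA finC by blast
  show "card M' \<le> card M"
  proof (rule ccontr)
    assume "\<not> card M' \<le> card M"
    hence lt: "card M < card M'" by simp
    obtain N where N: "is_bmatching ?E (\<lambda>_. 1) (q i) N" "card N = card M'" "fst ` M \<subseteq> fst ` N"
      using aug[OF finE M_bm M'bm lt] by blast
    have NE: "N \<subseteq> ?E" and ME: "M \<subseteq> ?E" using N(1) M_bm unfolding is_bmatching_def by auto
    have finN: "finite N" and finM: "finite M" using NE ME finE by (auto intro: finite_subset)
    define g where "g a = \<alpha> a * \<delta> ^ (i - 1)" for a
    have wN: "bm_weight (H_weight \<alpha> \<delta> i) N = sum g (fst ` N)"
      unfolding bm_weight_def H_weight_def g_def
      using sum.reindex[OF bm_inj[OF finN N(1)], of "\<lambda>a. \<alpha> a * \<delta> ^ (i - 1)"] by (simp add: o_def)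
    have wM: "bm_weight (H_weight \<alpha> \<delta> i) M = sum g (fst ` M)"
      unfolding bm_weight_def H_weight_def g_def
      using sum.reindex[OF bm_inj[OF finM M_bm], of "\<lambda>a. \<alpha> a * \<delta> ^ (i - 1)"] by (simp add: o_def)
    have cN: "card (fst ` N) = card N" using card_image[OF bm_inj[OF finN N(1)]] .
    have cM: "card (fst ` M) = card M" using card_image[OF bm_inj[OF finM M_bm]] .
    have "fst ` N - fst ` M \<noteq> {}"
    proof
      assume "fst ` N - fst ` M = {}"
      hence "fst ` N \<subseteq> fst ` M" by auto
      hence "card (fst ` N) \<le> card (fst ` M)" using finM by (intro card_mono) auto
      thus False using cN cM N(2) lt by simp
    qed
    moreover have "\<forall>a\<in>fst ` N. g a > 0" using NE Ai alpha_pos delta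
      unfolding g_def H_edges_def by auto
    ultimately have pos: "sum g (fst ` N - fst ` M) > 0" using finN
      by (intro sum_pos) auto
    have "sum g (fst ` N) = sum g (fst ` N - fst ` M) + sum g (fst ` M)"
      using sum.subset_diff[OF N(3)] finN by simp
    hence "bm_weight (H_weight \<alpha> \<delta> i) N > bm_weight (H_weight \<alpha> \<delta> i) M" using wN wM pos by simp
    moreover have "bm_weight (H_weight \<alpha> \<delta> i) N \<le> bm_weight (H_weight \<alpha> \<delta> i) M"
      using M_maxw N(1,2) M's by auto
    ultimately show False by simp
  qed
qed

end
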